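(* Assume that for every $(s,a)$ the probability weights of $\eta_{N,\infty}^{(s,a)}=\sum_{i=1}^N p_i^{(s,a)}(\theta)\delta_{z_i}$ are differentiable in $\theta$, and set $\nabla_\theta\eta_{N,\infty}^{(s,a)}:=\sum_i\nabla_\theta p_i^{(s,a)}(\theta)\delta_{z_i}$ (similarly for $\eta_{N,\infty}^s$). Define $g_{N}(s):=\sum_{a\in\mathcal A}\nabla_\theta\pi_\theta(a\mid s)\,\eta_{N,\infty}^{(s,a)}$. Let $\tau=(s_0,a_0,c_0,s_1,a_1,c_1,\dots)$ be a random trajectory with $s_0=s$, $a_t\sim\pi_\theta(\cdot\mid s_t)$, $c_t=C(s_t,a_t)$, $s_{t+1}\sim P(\cdot\mid s_t,a_t)$, and for $t\ge1$ set $$\tilde{\mathcal B}^{\tau}_t:=\Pi_{\mathcal C}(b_{c_0,\gamma})_\#\circ\Pi_{\mathcal C}(b_{c_1,\gamma})_\#\circ\cdots\circ\Pi_{\mathcal C}(b_{c_{t-1},\gamma})_\#.$$ Then $$\nabla_\theta\eta_{N,\infty}^{s}=\mathbb E_\tau\Big[g_N(s_0)+\sum_{t=1}^{|\tau|}\tilde{\mathcal B}^{\tau}_t\,g_N(s_t)\Big],$$ where $|\tau|$ is the length of the trajectory (the sum being over all $t\ge1$ for an infinite trajectory) and all operators act linearly on ($\mathbb R^d$-valued) signed measures supported on finitely many points.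
   Context: Finite MDP with states $\mathcal S$, actions $\mathcal A$, transition kernel $P$, deterministic costs $C(s,a)\in[c_{\min},c_{\max}]$, discount $\gamma\in[0,1)$, differentiable policies $\pi_\theta$, $\theta\in\mathbb R^d$. Grid: $N\ge2$, $z_i=z_{\min}+(i-1)\frac{z_{\max}-z_{\min}}{N-1}$. Projection $\Pi_{\mathcal C}$: $\Pi_{\mathcal C}\delta_y=\delta_{z_1}$ if $y\le z_1$, $=\delta_{z_N}$ if $y>z_N$, and $=\frac{z_{i+1}-y}{z_{i+1}-z_i}\delta_{z_i}+\frac{y-z_i}{z_{i+1}-z_i}\delta_{z_{i+1}}$ if $z_i<y\le z_{i+1}$, extended linearly to finite signed combinations of Diracs. $b_{c,\gamma}(z)=c+\gamma z$ and $(b_{c,\gamma})_\#\nu(A)=\nu(b_{c,\gamma}^{-1}(A))$. The projected distributional Bellman operator is $(\Pi_{\mathcal C}\mathcal T^\pi\eta)^{(s,a)}=\Pi_{\mathcal C}\big[\sum_{s'}P(s'\mid s,a)\sum_{a'}\pi(a'\mid s')(b_{C(s,a),\gamma})_\#\eta^{(s',a')}\big]$; $\eta_{N,\infty}$ is its unique fixed point among families of distributions on $\{z_1,\dots,z_N\}$, and $\eta_{N,\infty}^s:=\sum_a\pi_\theta(a\mid s)\eta_{N,\infty}^{(s,a)}$. *)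

theory Defs
  imports "HOL-Analysis.Analysis" "HOL-Probability.Probability"
begin

definition zgrid :: "nat \<Rightarrow> real \<Rightarrow> real \<Rightarrow> nat \<Rightarrow> real" where
  "zgrid N zmin zmax i = zmin + (real i - 1) * (zmax - zmin) / (real N - 1)"

definition proj_dirac :: "nat \<Rightarrow> real \<Rightarrow> real \<Rightarrow> real \<Rightarrow> nat \<Rightarrow> real" where
  "proj_dirac N zmin zmax y j =
     (let z = zgrid N zmin zmax in
      if y \<le> z 1 then (if j = 1 then 1 else 0)
      else if z N < y then (if j = N then 1 else 0)
      else (\<Sum>i\<in>{1..<N}. if z i < y \<and> y \<le> z (Suc i) then
              (if j = i then (z (Suc i) - y) / (z (Suc i) - z i)
               else if j = Suc i then (y - z i) / (z (Suc i) - z i) else 0)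
            else 0))"

text \<open>A (signed, vector-valued) measure supported on the grid is represented by its
  weights w j at the grid points z_j, j = 1..N.  The operator
  Pi_C o (b_{c,gamma})_# applied to sum_k w_k delta_{z_k} gives
  sum_k w_k Pi_C delta_{c + gamma z_k}.\<close>
definition proj_push :: "nat \<Rightarrow> real \<Rightarrow> real \<Rightarrow> real \<Rightarrow> real \<Rightarrow> (nat \<Rightarrow> 'v::real_vector) \<Rightarrow> nat \<Rightarrow> 'v" where
  "proj_push N zmin zmax \<gamma> c w j =
     (\<Sum>k\<in>{1..N}. proj_dirac N zmin zmax (c + \<gamma> * zgrid N zmin zmax k) j *\<^sub>R w k)"

text \<open>comp_ops [c0,...,c_{t-1}] = Pi(b_{c0})_# o ... o Pi(b_{c_{t-1}})_#.\<close>
primrec comp_ops :: "nat \<Rightarrow> real \<Rightarrow> real \<Rightarrow> real \<Rightarrow> real list \<Rightarrow> (nat \<Rightarrow> 'v::real_vector) \<Rightarrow> nat \<Rightarrow> 'v" where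
  "comp_ops N zmin zmax \<gamma> [] w = w"
| "comp_ops N zmin zmax \<gamma> (c # cs) w = proj_push N zmin zmax \<gamma> c (comp_ops N zmin zmax \<gamma> cs w)"

definition dist_family :: "nat \<Rightarrow> ('s \<Rightarrow> 'a \<Rightarrow> nat \<Rightarrow> real) \<Rightarrow> bool" where
  "dist_family N \<eta> \<longleftrightarrow> (\<forall>s a. (\<forall>i. i \<notin> {1..N} \<longrightarrow> \<eta> s a i = 0) \<and>
       (\<forall>i\<in>{1..N}. 0 \<le> \<eta> s a i) \<and> (\<Sum>i\<in>{1..N}. \<eta> s a i) = 1)"

definition pbellman :: "nat \<Rightarrow> real \<Rightarrow> real \<Rightarrow> real \<Rightarrow> ('s::finite \<Rightarrow> 'a::finite \<Rightarrow> real)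
   \<Rightarrow> ('s \<Rightarrow> 'a \<Rightarrow> 's \<Rightarrow> real) \<Rightarrow> ('s \<Rightarrow> 'a \<Rightarrow> real)
   \<Rightarrow> ('s \<Rightarrow> 'a \<Rightarrow> nat \<Rightarrow> real) \<Rightarrow> 's \<Rightarrow> 'a \<Rightarrow> nat \<Rightarrow> real" where
  "pbellman N zmin zmax \<gamma> C P pol \<eta> s a =
     proj_push N zmin zmax \<gamma> (C s a)
       (\<lambda>j. \<Sum>s'\<in>UNIV. P s a s' * (\<Sum>a'\<in>UNIV. pol s' a' * \<eta> s' a' j))"

definition eta_fix :: "nat \<Rightarrow> real \<Rightarrow> real \<Rightarrow> real \<Rightarrow> ('s::finite \<Rightarrow> 'a::finite \<Rightarrow> real)
   \<Rightarrow> ('s \<Rightarrow> 'a \<Rightarrow> 's \<Rightarrow> real) \<Rightarrow> ('s \<Rightarrow> 'a \<Rightarrow> real) \<Rightarrow> 's \<Rightarrow> 'a \<Rightarrow> nat \<Rightarrow> real" where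
  "eta_fix N zmin zmax \<gamma> C P pol =
     (THE \<eta>. dist_family N \<eta> \<and> pbellman N zmin zmax \<gamma> C P pol \<eta> = \<eta>)"

definition grad :: "(real^'d \<Rightarrow> real) \<Rightarrow> real^'d \<Rightarrow> real^'d" where
  "grad f \<theta> = (\<chi> k. frechet_derivative f (at \<theta>) (axis k 1))"

end

theory Submission
  imports Defs
begin


definition clip01 :: "real \<Rightarrow> real" where "clip01 x = max 0 (min 1 x)"

locale grid =
  fixes N :: nat and zmin zmax \<gamma> :: real
  assumes N2: "N \<ge> 2" and zlt: "zmin < zmax" and g0: "0 \<le> \<gamma>" and g1: "\<gamma> < 1"
begin

abbreviation z where "z \<equiv> zgrid N zmin zmax"
definition dz where "dz = (zmax - zmin) / (real N - 1)"

lemma dz_pos: "dz > 0"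
  using N2 zlt by (simp add: dz_def)

lemma z_eq: "z k = zmin + (real k - 1) * dz"
  by (simp add: zgrid_def dz_def)

lemma z_Suc: "z (Suc k) = z k + dz"
  by (simp add: z_eq algebra_simps)

lemma z_le: "i \<le> j \<Longrightarrow> z i \<le> z j"
  using dz_pos by (simp add: z_eq mult_right_mono)

lemma z_less: "i < j \<Longrightarrow> z i < z j"
  using dz_pos by (simp add: z_eq)

lemma z1: "z 1 = zmin" by (simp add: z_eq)
lemma z1': "z (Suc 0) = zmin" by (simp add: z_eq)

lemma pd_low: "y \<le> z 1 \<Longrightarrow> proj_dirac N zmin zmax y j = (if j = 1 then 1 else 0)"
  by (simp add: proj_dirac_def)

lemma pd_high: "z N < y \<Longrightarrow> proj_dirac N zmin zmax y j = (if j = N then 1 else 0)"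
proof -
  assume a: "z N < y"
  have "z 1 \<le> z N" using N2 by (intro z_le) auto
  then show ?thesis using a by (simp add: proj_dirac_def)
qed

lemma pd_mid:
  assumes i: "1 \<le> i" "i < N" and y: "z i < y" "y \<le> z (Suc i)"
  shows "proj_dirac N zmin zmax y j =
     (if j = i then (z (Suc i) - y) / dz else if j = Suc i then (y - z i) / dz else 0)"
proof -
  have "z 1 \<le> z i" using i by (intro z_le) auto
  hence n1: "\<not> y \<le> z 1" using y by auto
  have "z (Suc i) \<le> z N" using i by (intro z_le) auto
  hence n2: "\<not> z N < y" using y by auto
  have cond: "(z i' < y \<and> y \<le> z (Suc i')) \<longleftrightarrow> i' = i" for i'
  proof
    assume c: "z i' < y \<and> y \<le> z (Suc i')"
    show "i' = i"
    proof (rule ccontr)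
      assume "i' \<noteq> i"
      then consider "Suc i' \<le> i" | "Suc i \<le> i'" by linarith
      then show False
      proof cases
        case 1 then have "z (Suc i') \<le> z i" by (rule z_le)
        then show False using c y by auto
      next
        case 2 then have "z (Suc i) \<le> z i'" by (rule z_le)
        then show False using c y by auto
      qed
    qed
  qed (use y in auto)
  have dd: "z (Suc i) - z i = dz" by (simp add: z_Suc)
  have "proj_dirac N zmin zmax y j = (\<Sum>i'\<in>{1..<N}. if i' = i then
              (if j = i then (z (Suc i) - y) / dz
               else if j = Suc i then (y - z i) / dz else 0) else 0)"
    unfolding proj_dirac_def Let_def using n1 n2
    by (simp only: if_False cond dd) (intro sum.cong refl, auto simp: dd)
  also have "\<dots> = (if j = i then (z (Suc i) - y) / dz else if j = Suc i then (y - z i) / dz else 0)"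
    using i by (simp add: sum.delta)
  finally show ?thesis .
qed

lemma mid_exists:
  assumes "z 1 < y" "y \<le> z N"
  shows "\<exists>i. 1 \<le> i \<and> i < N \<and> z i < y \<and> y \<le> z (Suc i)"
proof -
  define r where "r = (y - zmin) / dz"
  have r0: "r > 0" using assms dz_pos by (simp add: r_def z1')
  have "y - zmin \<le> (real N - 1) * dz" using assms(2) by (simp add: z_eq)
  hence rN: "r \<le> real N - 1" using dz_pos by (simp add: r_def field_simps)
  define i where "i = nat \<lceil>r\<rceil>"
  have ci: "real i = of_int \<lceil>r\<rceil>" using r0 by (simp add: i_def)
  have c1: "r \<le> real i" using ci by linarith
  have c2: "real i < r + 1" using ci by linarith
  have i1: "1 \<le> i" using c1 r0 by linarith
  have "\<lceil>r\<rceil> \<le> int N - 1"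
    using rN ceiling_le[of r "int N - 1"] by simp
  hence iN: "i < N" using ci by linarith
  have yr: "y = zmin + r * dz" using dz_pos by (simp add: r_def)
  have "z i < y" unfolding z_eq yr using c2 dz_pos by (simp add: mult_strict_right_mono)
  moreover have "y \<le> z (Suc i)" unfolding z_eq yr using c1 dz_pos by (simp add: mult_right_mono)
  ultimately show ?thesis using i1 iN by blast
qed


lemma y_cases:
  obtains (low) "y \<le> z 1" | (high) "z N < y"
    | (mid) i where "1 \<le> i" "i < N" "z i < y" "y \<le> z (Suc i)"
  using mid_exists by (metis not_le)

lemma two_delta:
  "(\<Sum>j\<in>{1..k}. if j = i then a else if j = Suc i then b else (0::real))
     = (if i \<in> {1..k} then a else 0) + (if Suc i \<in> {1..k} then b else 0)"
proof -
  have "(\<Sum>j\<in>{1..k}. if j = i then a else if j = Suc i then b else (0::real))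
     = (\<Sum>j\<in>{1..k}. (if j = i then a else 0) + (if j = Suc i then b else 0))"
    by (intro sum.cong) auto
  also have "\<dots> = (if i \<in> {1..k} then a else 0) + (if Suc i \<in> {1..k} then b else 0)"
    by (simp add: sum.distrib)
  finally show ?thesis .
qed

lemma pd_nonneg: "0 \<le> proj_dirac N zmin zmax y j"
proof (cases y rule: y_cases)
  case low then show ?thesis by (simp add: pd_low)
next
  case high then show ?thesis by (simp add: pd_high)
next
  case (mid i) then show ?thesis using dz_pos by (simp add: pd_mid)
qed

lemma pd_out: "j \<notin> {1..N} \<Longrightarrow> proj_dirac N zmin zmax y j = 0"
proof (cases y rule: y_cases)
  case low then show "j \<notin> {1..N} \<Longrightarrow> ?thesis" using N2 by (auto simp add: pd_low)
next
  case high then show "j \<notin> {1..N} \<Longrightarrow> ?thesis" using N2 by (auto simp add: pd_high)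
next
  case (mid i) then show "j \<notin> {1..N} \<Longrightarrow> ?thesis" by (auto simp add: pd_mid)
qed

lemma pd_sum: "(\<Sum>j\<in>{1..N}. proj_dirac N zmin zmax y j) = 1"
proof (cases y rule: y_cases)
  case low then show ?thesis using N2 by (simp add: pd_low)
next
  case high then show ?thesis using N2 by (simp add: pd_high)
next
  case (mid i)
  then have "(\<Sum>j\<in>{1..N}. proj_dirac N zmin zmax y j) =
     (\<Sum>j\<in>{1..N}. if j = i then (z (Suc i) - y) / dz else if j = Suc i then (y - z i) / dz else 0)"
    by (simp add: pd_mid)
  also have "\<dots> = (z (Suc i) - y) / dz + (y - z i) / dz"
    using mid by (simp only: two_delta) auto
  also have "\<dots> = 1" using dz_pos by (simp add: z_Suc field_simps)
  finally show ?thesis .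
qed

definition H :: "nat \<Rightarrow> real \<Rightarrow> real" where
  "H k y = (\<Sum>j\<in>{1..k}. proj_dirac N zmin zmax y j)"

lemma H_eq:
  assumes k: "1 \<le> k" "k < N"
  shows "H k y = clip01 ((z (Suc k) - y) / dz)"
proof (cases y rule: y_cases)
  case low
  have "z (Suc 1) \<le> z (Suc k)" using k by (intro z_le) auto
  hence "1 \<le> (z (Suc k) - y) / dz" using low dz_pos by (simp add: z_Suc field_simps)
  then show ?thesis using low k by (simp add: H_def pd_low clip01_def)
next
  case high
  have "z (Suc k) \<le> z N" using k by (intro z_le) auto
  hence "(z (Suc k) - y) / dz \<le> 0" using high dz_pos by (simp add: divide_nonpos_pos)
  then show ?thesis using high k by (simp add: H_def pd_high clip01_def)
next
  case (mid i)
  have "H k y = (\<Sum>j\<in>{1..k}. if j = i then (z (Suc i) - y) / dz else if j = Suc i then (y - z i) / dz else 0)"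
    unfolding H_def using mid by (simp add: pd_mid)
  also have "\<dots> = (if i \<in> {1..k} then (z (Suc i) - y) / dz else 0) + (if Suc i \<in> {1..k} then (y - z i) / dz else 0)"
    by (rule two_delta)
  finally have Hk: "H k y = \<dots>" .
  consider "k < i" | "k = i" | "Suc i \<le> k" by linarith
  then show ?thesis
  proof cases
    case 1
    have "z (Suc k) \<le> z i" using 1 by (intro z_le) auto
    hence "(z (Suc k) - y) / dz \<le> 0" using mid dz_pos by (simp add: divide_nonpos_pos)
    then show ?thesis using 1 Hk by (simp add: clip01_def)
  next
    case 2
    have "0 \<le> (z (Suc k) - y) / dz" "(z (Suc k) - y) / dz \<le> 1"
      using 2 mid dz_pos by (auto simp: z_Suc field_simps)
    then show ?thesis using 2 Hk mid by (simp add: clip01_def)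
  next
    case 3
    have "z (Suc (Suc i)) \<le> z (Suc k)" using 3 by (intro z_le) auto
    hence "1 \<le> (z (Suc k) - y) / dz" using mid dz_pos by (simp add: z_Suc field_simps)
    moreover have "(z (Suc i) - y) / dz + (y - z i) / dz = 1" using dz_pos by (simp add: z_Suc field_simps)
    ultimately show ?thesis using 3 Hk mid by (simp add: clip01_def)
  qed
qed

lemma clip_sum: "(\<Sum>k\<in>{1..n}. clip01 (real k - u)) = max 0 (min (real n) (real n - u))"
proof (induction n)
  case 0 then show ?case by simp
next
  case (Suc n)
  have "(\<Sum>k\<in>{1..Suc n}. clip01 (real k - u)) = max 0 (min (real n) (real n - u)) + clip01 (real n + 1 - u)"
    using Suc by (simp add: add.commute)
  also have "\<dots> = max 0 (min (real (Suc n)) (real (Suc n) - u))"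
    by (simp add: clip01_def max_def min_def)
  finally show ?case .
qed

definition G :: "real \<Rightarrow> real" where
  "G y = (\<Sum>k\<in>{1..<N}. H k y)"

lemma G_eq: "G y = max 0 (min (real N - 1) (real N - 1 - (y - zmin) / dz))"
proof -
  have "G y = (\<Sum>k\<in>{1..N-1}. clip01 (real k - (y - zmin) / dz))"
    unfolding G_def
  proof (intro sum.cong)
    show "{1..<N} = {1..N-1}" using N2 by auto
  next
    fix k assume k: "k \<in> {1..N-1}"
    hence "H k y = clip01 ((z (Suc k) - y) / dz)" using N2 by (intro H_eq) auto
    also have "(z (Suc k) - y) / dz = real k - (y - zmin) / dz"
      using dz_pos by (simp add: z_eq field_simps)
    finally show "H k y = clip01 (real k - (y - zmin) / dz)" .
  qed
  also have "\<dots> = max 0 (min (real N - 1) (real N - 1 - (y - zmin) / dz))"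
    using N2 clip_sum[where n="N-1" and u="(y - zmin) / dz"] by (simp add: of_nat_diff)
  finally show ?thesis .
qed

lemma G_lip: "y \<le> y' \<Longrightarrow> G y - G y' \<le> (y' - y) / dz"
proof -
  assume "y \<le> y'"
  hence "(y - zmin) / dz \<le> (y' - zmin) / dz" using dz_pos by (simp add: divide_right_mono)
  moreover have "(y' - y) / dz = (y' - zmin) / dz - (y - zmin) / dz" by (simp add: diff_divide_distrib)
  ultimately show ?thesis unfolding G_eq by (simp add: max_def min_def)
qed

lemma H_anti:
  assumes "1 \<le> k" "k < N" "y \<le> y'" shows "H k y' \<le> H k y"
proof -
  have "(z (Suc k) - y') / dz \<le> (z (Suc k) - y) / dz" using assms dz_pos by (simp add: divide_right_mono)
  thus ?thesis using assms by (simp add: H_eq clip01_def max_def min_def)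
qed


definition cn :: "(nat \<Rightarrow> 'v::real_normed_vector) \<Rightarrow> real" where
  "cn w = (\<Sum>k\<in>{1..<N}. norm (\<Sum>j\<in>{1..k}. w j))"

definition ms :: "(nat \<Rightarrow> 'v::real_vector) \<Rightarrow> 'v" where
  "ms w = (\<Sum>j\<in>{1..N}. w j)"

abbreviation pp where "pp \<equiv> proj_push N zmin zmax \<gamma>"

lemma pp_out: "j \<notin> {1..N} \<Longrightarrow> pp c w j = 0"
  by (simp add: proj_push_def pd_out)

lemma pp_ms: "ms (pp c w) = ms w"
proof -
  have "ms (pp c w) = (\<Sum>k\<in>{1..N}. (\<Sum>j\<in>{1..N}. proj_dirac N zmin zmax (c + \<gamma> * z k) j) *\<^sub>R w k)"
    unfolding ms_def proj_push_def by (subst sum.swap) (simp add: scaleR_sum_left)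
  also have "\<dots> = ms w" by (simp add: pd_sum ms_def del: One_nat_def)
  finally show ?thesis .
qed

lemma pp_partial: "(\<Sum>j\<in>{1..m}. pp c w j) = (\<Sum>k\<in>{1..N}. H m (c + \<gamma> * z k) *\<^sub>R w k)"
  unfolding proj_push_def H_def by (subst sum.swap) (simp add: scaleR_sum_left)

lemma pp_sum: "pp c (\<lambda>j. \<Sum>x\<in>X. f x j) j' = (\<Sum>x\<in>X. pp c (f x) j')"
  unfolding proj_push_def by (simp add: scaleR_sum_right) (rule sum.swap)

lemma pp_scale: "pp c (\<lambda>j. a *\<^sub>R w j) j' = a *\<^sub>R pp c w j'"
  unfolding proj_push_def by (simp add: scaleR_sum_right algebra_simps)

lemma pp_add: "pp c (\<lambda>j. v j + w j) j' = pp c v j' + pp c w j'"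
  unfolding proj_push_def by (simp add: scaleR_add_right sum.distrib)

lemma pp_diff: "pp c (\<lambda>j. v j - w j) j' = pp c v j' - pp c w j'"
  unfolding proj_push_def by (simp add: scaleR_diff_right sum_subtractf)

lemma ms_sum: "ms (\<lambda>j. \<Sum>x\<in>X. f x j) = (\<Sum>x\<in>X. ms (f x))"
  unfolding ms_def by (rule sum.swap)

lemma ms_scale: "ms (\<lambda>j. a *\<^sub>R w j) = a *\<^sub>R ms w"
  unfolding ms_def by (simp add: scaleR_sum_right)

lemma ms_add: "ms (\<lambda>j. v j + w j) = ms v + ms w"
  unfolding ms_def by (simp add: sum.distrib)

lemma ms_diff: "ms (\<lambda>j. v j - w j) = ms v - ms w"
  unfolding ms_def by (simp add: sum_subtractf)

lemma cn_nonneg: "0 \<le> cn w"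
  unfolding cn_def by (intro sum_nonneg) auto

lemma cn_sum: "cn (\<lambda>j. \<Sum>x\<in>X. f x j) \<le> (\<Sum>x\<in>X. cn (f x))"
proof -
  have "cn (\<lambda>j. \<Sum>x\<in>X. f x j) = (\<Sum>k\<in>{1..<N}. norm (\<Sum>x\<in>X. \<Sum>j\<in>{1..k}. f x j))"
    unfolding cn_def by (subst sum.swap) simp
  also have "\<dots> \<le> (\<Sum>k\<in>{1..<N}. \<Sum>x\<in>X. norm (\<Sum>j\<in>{1..k}. f x j))"
    by (intro sum_mono norm_sum)
  also have "\<dots> = (\<Sum>x\<in>X. cn (f x))"
    unfolding cn_def by (rule sum.swap)
  finally show ?thesis .
qed

lemma cn_scale: "cn (\<lambda>j. a *\<^sub>R w j) = \<bar>a\<bar> * cn w"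
  unfolding cn_def by (simp add: scaleR_sum_right[symmetric] sum_distrib_left)

lemma cn_add: "cn (\<lambda>j. v j + w j) \<le> cn v + cn w"
  unfolding cn_def sum.distrib[symmetric] by (intro sum_mono) (simp add: sum.distrib norm_triangle_ineq)

lemma cn_diff: "cn (\<lambda>j. v j - w j) \<le> cn v + cn w"
  unfolding cn_def sum.distrib[symmetric] by (intro sum_mono) (simp add: sum_subtractf norm_triangle_ineq4)

lemma cn_comp:
  assumes "ms w = 0" "i \<in> {1..N}"
  shows "norm (w i) \<le> 2 * cn w"
proof -
  define F where "F k = (\<Sum>j\<in>{1..k}. w j)" for k
  have Fle: "norm (F k) \<le> cn w" if "k < N" for k
  proof (cases "k = 0")
    case True then show ?thesis by (simp add: F_def cn_nonneg)
  next
    case False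
    then have "k \<in> {1..<N}" using that by auto
    then show ?thesis unfolding cn_def F_def
      by (intro member_le_sum) auto
  qed
  have wi: "w i = F i - F (i - 1)"
  proof -
    have e: "{1..i} = insert i {1..i-1}" using assms(2) by auto
    have ni: "i \<notin> {1..i-1}" using assms(2) by auto
    show ?thesis unfolding F_def e sum.insert[OF finite_atLeastAtMost ni] by simp
  qed
  show ?thesis
  proof (cases "i < N")
    case True
    have "norm (w i) \<le> norm (F i) + norm (F (i - 1))" unfolding wi by (rule norm_triangle_ineq4)
    also have "\<dots> \<le> 2 * cn w" using Fle[of i] Fle[of "i-1"] True by linarith
    finally show ?thesis .
  next
    case False
    hence iN: "i = N" using assms(2) by auto
    have "F N = 0" using assms(1) by (simp add: F_def ms_def)
    hence "norm (w i) = norm (F (N - 1))" using wi iN by simp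
    also have "\<dots> \<le> cn w" using Fle[of "N-1"] N2 by auto
    also have "\<dots> \<le> 2 * cn w" using cn_nonneg[of w] by simp
    finally show ?thesis .
  qed
qed

end

lemma abel:
  fixes w :: "nat \<Rightarrow> 'v::real_vector"
  shows "(\<Sum>k\<in>{1..n}. h k *\<^sub>R w k) = h n *\<^sub>R (\<Sum>j\<in>{1..n}. w j)
          - (\<Sum>k<n. (h (Suc k) - h k) *\<^sub>R (\<Sum>j\<in>{1..k}. w j))"
proof (induction n)
  case 0 then show ?case by simp
next
  case (Suc n)
  then show ?case by (simp add: algebra_simps)
qed

context grid begin

lemma contraction:
  fixes w :: "nat \<Rightarrow> 'v::real_normed_vector"
  assumes ms0: "ms w = 0"
  shows "cn (pp c w) \<le> \<gamma> * cn w"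
proof -
  define y where "y k = c + \<gamma> * z k" for k
  define F where "F k = (\<Sum>j\<in>{1..k}. w j)" for k
  have ymono: "y k \<le> y (Suc k)" for k
    using g0 dz_pos by (simp add: y_def z_Suc mult_left_mono)
  have ydiff: "y (Suc k) - y k = \<gamma> * dz" for k
    by (simp add: y_def z_Suc algebra_simps)
  have FN: "F N = 0" using ms0 by (simp add: F_def ms_def)
  have step: "norm (\<Sum>j\<in>{1..m}. pp c w j) \<le> (\<Sum>k<N. (H m (y k) - H m (y (Suc k))) * norm (F k))"
    if m: "m \<in> {1..<N}" for m
  proof -
    have "(\<Sum>j\<in>{1..m}. pp c w j) = (\<Sum>k\<in>{1..N}. H m (y k) *\<^sub>R w k)"
      unfolding y_def by (rule pp_partial)
    also have "\<dots> = - (\<Sum>k<N. (H m (y (Suc k)) - H m (y k)) *\<^sub>R F k)"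
      using FN abel[where h="\<lambda>k. H m (y k)" and w=w and n=N] by (simp add: F_def)
    finally have "norm (\<Sum>j\<in>{1..m}. pp c w j) = norm (\<Sum>k<N. (H m (y (Suc k)) - H m (y k)) *\<^sub>R F k)"
      by simp
    also have "\<dots> \<le> (\<Sum>k<N. norm ((H m (y (Suc k)) - H m (y k)) *\<^sub>R F k))"
      by (rule norm_sum)
    also have "\<dots> = (\<Sum>k<N. (H m (y k) - H m (y (Suc k))) * norm (F k))"
    proof (intro sum.cong refl)
      fix k
      have "H m (y (Suc k)) \<le> H m (y k)" using m ymono by (intro H_anti) auto
      then show "norm ((H m (y (Suc k)) - H m (y k)) *\<^sub>R F k) = (H m (y k) - H m (y (Suc k))) * norm (F k)"
        by simp
    qed
    finally show ?thesis .
  qed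
  have "cn (pp c w) \<le> (\<Sum>m\<in>{1..<N}. \<Sum>k<N. (H m (y k) - H m (y (Suc k))) * norm (F k))"
    unfolding cn_def by (intro sum_mono step)
  also have "\<dots> = (\<Sum>k<N. (G (y k) - G (y (Suc k))) * norm (F k))"
    unfolding G_def sum_subtractf[symmetric] sum_distrib_right by (rule sum.swap)
  also have "\<dots> \<le> (\<Sum>k<N. \<gamma> * norm (F k))"
  proof (intro sum_mono mult_right_mono)
    fix k
    have "G (y k) - G (y (Suc k)) \<le> (y (Suc k) - y k) / dz" by (intro G_lip ymono)
    also have "\<dots> = \<gamma>" using dz_pos by (simp add: ydiff)
    finally show "G (y k) - G (y (Suc k)) \<le> \<gamma>" .
  qed simp
  also have "\<dots> = \<gamma> * cn w"
  proof -
    have "{..<N} = insert 0 {1..<N}" using N2 by auto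
    then show ?thesis by (simp add: sum_distrib_left[symmetric] cn_def F_def)
  qed
  finally show ?thesis .
qed

end

context grid begin

lemma mixcn:
  fixes D :: "'x::finite \<Rightarrow> nat \<Rightarrow> 'v::real_normed_vector"
  assumes p0: "\<And>x. 0 \<le> p x" and p1: "(\<Sum>x\<in>UNIV. p x) = 1"
    and ms0: "\<And>x. ms (D x) = 0" and cnB: "\<And>x. cn (D x) \<le> B"
  shows "cn (\<lambda>k. \<Sum>x\<in>UNIV. p x *\<^sub>R D x k) \<le> B" "ms (\<lambda>k. \<Sum>x\<in>UNIV. p x *\<^sub>R D x k) = 0"
proof -
  have "cn (\<lambda>k. \<Sum>x\<in>UNIV. p x *\<^sub>R D x k) \<le> (\<Sum>x\<in>UNIV. cn (\<lambda>k. p x *\<^sub>R D x k))"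
    by (rule cn_sum)
  also have "\<dots> = (\<Sum>x\<in>UNIV. p x * cn (D x))" using p0 by (simp add: cn_scale)
  also have "\<dots> \<le> (\<Sum>x\<in>UNIV. p x * B)" using p0 cnB by (intro sum_mono mult_left_mono) auto
  also have "\<dots> = B" using p1 by (simp add: sum_distrib_right[symmetric])
  finally show "cn (\<lambda>k. \<Sum>x\<in>UNIV. p x *\<^sub>R D x k) \<le> B" .
  show "ms (\<lambda>k. \<Sum>x\<in>UNIV. p x *\<^sub>R D x k) = 0"
    by (simp add: ms_sum ms_scale ms0)
qed

lemma mixpp:
  fixes D :: "'x::finite \<Rightarrow> nat \<Rightarrow> 'v::real_normed_vector"
  assumes p0: "\<And>x. 0 \<le> p x" and p1: "(\<Sum>x\<in>UNIV. p x) = 1"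
    and ms0: "\<And>x. ms (D x) = 0" and cnB: "\<And>x. cn (D x) \<le> B"
  shows "cn (pp c (\<lambda>k. \<Sum>x\<in>UNIV. p x *\<^sub>R D x k)) \<le> \<gamma> * B"
    "ms (pp c (\<lambda>k. \<Sum>x\<in>UNIV. p x *\<^sub>R D x k)) = 0"
proof -
  have m: "cn (\<lambda>k. \<Sum>x\<in>UNIV. p x *\<^sub>R D x k) \<le> B" "ms (\<lambda>k. \<Sum>x\<in>UNIV. p x *\<^sub>R D x k) = 0"
    by (rule mixcn[where p=p and D=D], (use assms in auto)[4])+
  show "cn (pp c (\<lambda>k. \<Sum>x\<in>UNIV. p x *\<^sub>R D x k)) \<le> \<gamma> * B"
    using contraction[OF m(2), of c] mult_left_mono[OF m(1) g0] by linarith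
  show "ms (pp c (\<lambda>k. \<Sum>x\<in>UNIV. p x *\<^sub>R D x k)) = 0" using m(2) by (simp add: pp_ms)
qed

lemma le_pow_zero:
  fixes x B :: real
  assumes "\<And>n. x \<le> \<gamma> ^ n * B" shows "x \<le> 0"
proof -
  have "(\<lambda>n. \<gamma> ^ n * B) \<longlonglongrightarrow> 0 * B"
    using g0 g1 by (intro tendsto_mult LIMSEQ_power_zero tendsto_const) auto
  then show ?thesis using assms by (intro LIMSEQ_le_const[of "\<lambda>n. \<gamma> ^ n * B"]) auto
qed

end

definition policy :: "('s \<Rightarrow> 'a::finite \<Rightarrow> real) \<Rightarrow> bool" where
  "policy pol \<longleftrightarrow> (\<forall>s a. 0 \<le> pol s a) \<and> (\<forall>s. (\<Sum>a\<in>UNIV. pol s a) = 1)"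

locale mdp = grid N zmin zmax \<gamma> for N zmin zmax \<gamma> +
  fixes C :: "'s::finite \<Rightarrow> 'a::finite \<Rightarrow> real" and P :: "'s \<Rightarrow> 'a \<Rightarrow> 's \<Rightarrow> real"
  assumes P_nonneg: "0 \<le> P s a s'" and P_sum: "(\<Sum>s'\<in>UNIV. P s a s') = 1"
begin

definition Tv :: "('s \<Rightarrow> 'a \<Rightarrow> real) \<Rightarrow> ('s \<Rightarrow> 'a \<Rightarrow> nat \<Rightarrow> 'v::real_vector) \<Rightarrow> 's \<Rightarrow> 'a \<Rightarrow> nat \<Rightarrow> 'v" where
  "Tv pol \<delta> s a = pp (C s a) (\<lambda>k. \<Sum>s'\<in>UNIV. P s a s' *\<^sub>R (\<Sum>a'\<in>UNIV. pol s' a' *\<^sub>R \<delta> s' a' k))"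

lemma pbellman_Tv: "pbellman N zmin zmax \<gamma> C P pol \<eta> = Tv pol \<eta>"
  by (simp add: pbellman_def Tv_def fun_eq_iff)

lemma Tv_diff: "Tv pol (\<lambda>s a j. \<delta>1 s a j - \<delta>2 s a j) s a j = Tv pol \<delta>1 s a j - Tv pol \<delta>2 s a j"
  unfolding Tv_def by (simp add: pp_diff[symmetric] scaleR_diff_right sum_subtractf)

lemma Tv_bound:
  fixes \<delta> :: "'s \<Rightarrow> 'a \<Rightarrow> nat \<Rightarrow> 'v::real_normed_vector"
  assumes pol: "policy pol" and ms0: "\<And>s a. ms (\<delta> s a) = 0" and cnB: "\<And>s a. cn (\<delta> s a) \<le> B"
  shows "cn (Tv pol \<delta> s a) \<le> \<gamma> * B" "ms (Tv pol \<delta> s a) = 0"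
proof -
  have inner: "cn (\<lambda>k. \<Sum>a'\<in>UNIV. pol s' a' *\<^sub>R \<delta> s' a' k) \<le> B"
      "ms (\<lambda>k. \<Sum>a'\<in>UNIV. pol s' a' *\<^sub>R \<delta> s' a' k) = 0" for s'
    using pol ms0 cnB by (auto intro!: mixcn simp: policy_def)
  show "cn (Tv pol \<delta> s a) \<le> \<gamma> * B" "ms (Tv pol \<delta> s a) = 0"
    unfolding Tv_def using inner by (auto intro!: mixpp P_nonneg P_sum)
qed

lemma Tv_iter:
  fixes D :: "nat \<Rightarrow> 's \<Rightarrow> 'a \<Rightarrow> nat \<Rightarrow> 'v::real_normed_vector"
  assumes pol: "policy pol" and rec: "\<And>n. D (Suc n) = Tv pol (D n)"
    and ms0: "\<And>s a. ms (D 0 s a) = 0" and cnB: "\<And>s a. cn (D 0 s a) \<le> B"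
  shows "ms (D n s a) = 0 \<and> cn (D n s a) \<le> \<gamma> ^ n * B"
proof (induction n arbitrary: s a)
  case 0 then show ?case using ms0 cnB by simp
next
  case (Suc n)
  have "cn (Tv pol (D n) s a) \<le> \<gamma> * (\<gamma> ^ n * B)" "ms (Tv pol (D n) s a) = 0"
    using Suc by (auto intro!: Tv_bound pol)
  then show ?case by (simp add: rec)
qed

lemma zero_if_cn:
  fixes \<delta> :: "'s \<Rightarrow> 'a \<Rightarrow> nat \<Rightarrow> 'v::real_normed_vector"
  assumes pol: "policy pol" and fx: "Tv pol \<delta> = \<delta>" and ms0: "\<And>s a. ms (\<delta> s a) = 0"
    and j: "j \<in> {1..N}"
  shows "\<delta> s a j = 0"
proof -
  define B where "B = (\<Sum>p\<in>UNIV. cn (\<delta> (fst p) (snd p)))"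
  have cnB: "cn (\<delta> s a) \<le> B" for s a
    unfolding B_def using member_le_sum[of "(s,a)" UNIV "\<lambda>p. cn (\<delta> (fst p) (snd p))"] cn_nonneg
    by auto
  have "cn (\<delta> s a) \<le> \<gamma> ^ n * B" for n
    using Tv_iter[where D="\<lambda>n. \<delta>", OF pol _ ms0 cnB] fx by auto
  hence "cn (\<delta> s a) \<le> 0" by (rule le_pow_zero)
  hence "norm (\<delta> s a j) \<le> 0" using cn_comp[OF ms0 j, of s a] by linarith
  then show ?thesis by simp
qed

end

context mdp begin

lemma dist_family_iff: "dist_family N \<eta> \<longleftrightarrow> (\<forall>s a. (\<forall>i. i \<notin> {1..N} \<longrightarrow> \<eta> s a i = 0) \<and>
       (\<forall>i\<in>{1..N}. 0 \<le> \<eta> s a i) \<and> ms (\<eta> s a) = 1)"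
  by (simp add: dist_family_def ms_def)

lemma Tv_dist:
  assumes pol: "policy pol" and d: "dist_family N \<eta>"
  shows "dist_family N (Tv pol \<eta>)"
proof -
  have nn: "0 \<le> \<eta> s a k" for s a k
    using d by (cases "k \<in> {1..N}") (auto simp: dist_family_def)
  have m1: "ms (\<eta> s a) = 1" for s a using d by (simp add: dist_family_iff)
  have pn: "0 \<le> pol s a" for s a using pol by (simp add: policy_def)
  have ps: "(\<Sum>a\<in>UNIV. pol s a) = 1" for s using pol by (simp add: policy_def)
  show ?thesis unfolding dist_family_iff
  proof (rule allI, rule allI, intro conjI)
    fix s a
    show "\<forall>i. i \<notin> {1..N} \<longrightarrow> Tv pol \<eta> s a i = 0" by (simp add: Tv_def pp_out)
    show "\<forall>i\<in>{1..N}. 0 \<le> Tv pol \<eta> s a i"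
      unfolding Tv_def proj_push_def
      by (auto intro!: sum_nonneg mult_nonneg_nonneg pd_nonneg P_nonneg pn nn)
    show "ms (Tv pol \<eta> s a) = 1"
      unfolding Tv_def pp_ms ms_sum ms_scale m1 by (simp add: ps P_sum)
  qed
qed

lemma fix_unique:
  assumes pol: "policy pol" and d1: "dist_family N \<eta>1" and f1: "Tv pol \<eta>1 = \<eta>1"
    and d2: "dist_family N \<eta>2" and f2: "Tv pol \<eta>2 = \<eta>2"
  shows "\<eta>1 = \<eta>2"
proof (intro ext)
  fix s a j
  define \<delta> where "\<delta> = (\<lambda>s a j. \<eta>1 s a j - \<eta>2 s a j)"
  have fx: "Tv pol \<delta> = \<delta>" unfolding \<delta>_def by (intro ext) (simp add: Tv_diff f1 f2)
  have ms0: "ms (\<delta> s a) = 0" for s a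
    using d1 d2 unfolding \<delta>_def by (simp add: ms_diff dist_family_iff)
  show "\<eta>1 s a j = \<eta>2 s a j"
  proof (cases "j \<in> {1..N}")
    case True
    then show ?thesis using zero_if_cn[OF pol fx ms0 True, of s a] by (simp add: \<delta>_def)
  next
    case False
    then show ?thesis using d1 d2 by (simp add: dist_family_def)
  qed
qed

lemma fix_exists:
  assumes pol: "policy pol"
  shows "\<exists>\<eta>. dist_family N \<eta> \<and> Tv pol \<eta> = \<eta>"
proof -
  define it where "it n = (Tv pol ^^ n) (\<lambda>s a j. if j = 1 then 1 else (0::real))" for n
  have it_Suc: "it (Suc n) = Tv pol (it n)" for n by (simp add: it_def)
  have d0: "dist_family N (it 0)" using N2 by (simp add: it_def dist_family_def)
  have dn: "dist_family N (it n)" for n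
    by (induction n) (simp_all add: d0 it_Suc Tv_dist pol)
  define D where "D n = (\<lambda>s a j. it (Suc n) s a j - it n s a j)" for n
  have Drec: "D (Suc n) = Tv pol (D n)" for n
    unfolding D_def by (intro ext) (simp add: Tv_diff it_Suc)
  have Dms: "ms (D 0 s a) = 0" for s a
    using dn[of 0] dn[of 1] by (simp add: D_def ms_diff dist_family_iff)
  define B where "B = (\<Sum>p\<in>UNIV. cn (D 0 (fst p) (snd p)))"
  have cnB: "cn (D 0 s a) \<le> B" for s a
    unfolding B_def using member_le_sum[of "(s,a)" UNIV "\<lambda>p. cn (D 0 (fst p) (snd p))"] cn_nonneg
    by auto
  have Dit: "ms (D n s a) = 0 \<and> cn (D n s a) \<le> \<gamma> ^ n * B" for n s a
    by (rule Tv_iter[OF pol Drec Dms cnB])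
  have Dbound: "norm (D n s a j) \<le> 2 * B * \<gamma> ^ n" for n s a j
  proof (cases "j \<in> {1..N}")
    case True
    then show ?thesis using cn_comp[of "D n s a" j] Dit[of n s a] by (simp add: algebra_simps)
  next
    case False
    hence "D n s a j = 0" using dn[of n] dn[of "Suc n"] by (simp add: D_def dist_family_def)
    moreover have "0 \<le> B" using cnB[of undefined undefined] cn_nonneg[of "D 0 undefined undefined"] by simp
    ultimately show ?thesis using g0 by simp
  qed
  have summ: "summable (\<lambda>n. D n s a j)" for s a j
  proof (rule summable_comparison_test)
    show "\<exists>N'. \<forall>n\<ge>N'. norm (D n s a j) \<le> 2 * B * \<gamma> ^ n" using Dbound by blast
    show "summable (\<lambda>n. 2 * B * \<gamma> ^ n)" using g0 g1 by (intro summable_mult summable_geometric) auto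
  qed
  have itsum: "it n s a j = it 0 s a j + (\<Sum>k<n. D k s a j)" for n s a j
    by (induction n) (simp_all add: D_def)
  define L where "L s a j = it 0 s a j + (\<Sum>k. D k s a j)" for s a j
  have lim: "(\<lambda>n. it n s a j) \<longlonglongrightarrow> L s a j" for s a j
  proof -
    have e: "(\<lambda>n. it n s a j) = (\<lambda>n. it 0 s a j + (\<Sum>k<n. D k s a j))"
      by (rule ext) (rule itsum)
    show ?thesis unfolding e L_def by (intro tendsto_add tendsto_const summable_LIMSEQ summ)
  qed
  have lim2: "(\<lambda>n. Tv pol (it n) s a j) \<longlonglongrightarrow> Tv pol L s a j" for s a j
    unfolding Tv_def proj_push_def by (intro tendsto_intros lim)
  have lim3: "(\<lambda>n. Tv pol (it n) s a j) \<longlonglongrightarrow> L s a j" for s a j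
    unfolding it_Suc[symmetric] using lim by (rule LIMSEQ_Suc)
  have fx: "Tv pol L = L" using LIMSEQ_unique[OF lim2 lim3] by (intro ext)
  have dL: "dist_family N L"
    unfolding dist_family_def
  proof (intro allI conjI ballI impI)
    fix s a i
    assume "i \<notin> {1..N}"
    hence "it n s a i = 0" for n using dn[of n] by (simp add: dist_family_def)
    then show "L s a i = 0" using LIMSEQ_unique[OF lim[of s a i]] by simp
  next
    fix s a i assume "i \<in> {1..N}"
    hence "0 \<le> it n s a i" for n using dn[of n] by (simp add: dist_family_def)
    then show "0 \<le> L s a i" by (intro LIMSEQ_le_const[OF lim]) auto
  next
    fix s a
    have e: "(\<lambda>n. \<Sum>i\<in>{1..N}. it n s a i) = (\<lambda>n. 1)"
      by (rule ext) (use dn in \<open>simp add: dist_family_def\<close>)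
    have "(\<lambda>n. \<Sum>i\<in>{1..N}. it n s a i) \<longlonglongrightarrow> (\<Sum>i\<in>{1..N}. L s a i)"
      by (intro tendsto_sum lim)
    hence "(\<lambda>n. 1::real) \<longlonglongrightarrow> (\<Sum>i\<in>{1..N}. L s a i)" unfolding e .
    from LIMSEQ_unique[OF tendsto_const this] show "(\<Sum>i\<in>{1..N}. L s a i) = 1" by simp
  qed
  show ?thesis using dL fx by blast
qed

lemma eta_fix_spec:
  assumes pol: "policy pol"
  shows "dist_family N (eta_fix N zmin zmax \<gamma> C P pol)"
    "Tv pol (eta_fix N zmin zmax \<gamma> C P pol) = eta_fix N zmin zmax \<gamma> C P pol"
proof -
  have "\<exists>!\<eta>. dist_family N \<eta> \<and> pbellman N zmin zmax \<gamma> C P pol \<eta> = \<eta>"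
    using fix_exists[OF pol] fix_unique[OF pol] unfolding pbellman_Tv by blast
  from theI'[OF this] show "dist_family N (eta_fix N zmin zmax \<gamma> C P pol)"
    "Tv pol (eta_fix N zmin zmax \<gamma> C P pol) = eta_fix N zmin zmax \<gamma> C P pol"
    unfolding eta_fix_def pbellman_Tv by auto
qed

end



lemma grad_eq: "(f has_derivative f') (at \<theta>) \<Longrightarrow> grad f \<theta> = (\<chi> i. f' (axis i 1))"
  by (simp add: grad_def frechet_derivative_at[symmetric])

locale gsetup = mdp N zmin zmax \<gamma> C P for N zmin zmax \<gamma> and C :: "'s::finite \<Rightarrow> 'a::finite \<Rightarrow> real" and P +
  fixes \<pi> :: "real^'d \<Rightarrow> 's \<Rightarrow> 'a \<Rightarrow> real" and \<theta> :: "real^'d"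
  assumes pol: "\<And>\<phi>. policy (\<pi> \<phi>)"
    and pi_diff: "\<And>s a \<phi>. (\<lambda>\<phi>'. \<pi> \<phi>' s a) differentiable (at \<phi>)"
    and eta_diff: "\<And>s a i \<phi>. i \<in> {1..N} \<Longrightarrow>
        (\<lambda>\<phi>'. eta_fix N zmin zmax \<gamma> C P (\<pi> \<phi>') s a i) differentiable (at \<phi>)"
begin

definition E where "E \<phi> = eta_fix N zmin zmax \<gamma> C P (\<pi> \<phi>)"
definition DE where "DE s a k = frechet_derivative (\<lambda>\<phi>. E \<phi> s a k) (at \<theta>)"
definition Dpi where "Dpi s a = frechet_derivative (\<lambda>\<phi>. \<pi> \<phi> s a) (at \<theta>)"
definition Gm where "Gm s a j = grad (\<lambda>\<phi>. E \<phi> s a j) \<theta>"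
definition gg where "gg s j = (\<Sum>a\<in>UNIV. E \<theta> s a j *\<^sub>R grad (\<lambda>\<phi>. \<pi> \<phi> s a) \<theta>)"

lemma hdE: "k \<in> {1..N} \<Longrightarrow> ((\<lambda>\<phi>. E \<phi> s a k) has_derivative DE s a k) (at \<theta>)"
  unfolding DE_def E_def using eta_diff frechet_derivative_works by blast

lemma hdpi: "((\<lambda>\<phi>. \<pi> \<phi> s a) has_derivative Dpi s a) (at \<theta>)"
  unfolding Dpi_def using pi_diff frechet_derivative_works by blast

lemma Gm_comp: "Gm s a j $ i = DE s a j (axis i 1)"
  by (simp add: Gm_def grad_def DE_def)

lemma gradpi_comp: "grad (\<lambda>\<phi>. \<pi> \<phi> s a) \<theta> $ i = Dpi s a (axis i 1)"
  by (simp add: grad_def Dpi_def)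

lemma E_dist: "dist_family N (E \<phi>)"
  unfolding E_def by (rule eta_fix_spec(1)[OF pol])

lemma E_fix: "E \<phi> s a j = Tv (\<pi> \<phi>) (E \<phi>) s a j"
  unfolding E_def using eta_fix_spec(2)[OF pol] by simp

lemma Gm_out: "j \<notin> {1..N} \<Longrightarrow> Gm s a j = 0"
proof -
  assume j: "j \<notin> {1..N}"
  have "(\<lambda>\<phi>. E \<phi> s a j) = (\<lambda>\<phi>. 0)" using E_dist j by (auto simp: dist_family_def)
  then show ?thesis unfolding Gm_def by (simp add: grad_eq[OF has_derivative_const] vec_eq_iff)
qed

lemma Gm_ms: "ms (Gm s a) = 0"
proof -
  have "(\<lambda>\<phi>. \<Sum>j\<in>{1..N}. E \<phi> s a j) = (\<lambda>\<phi>. 1)" using E_dist by (auto simp: dist_family_def)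
  moreover have "((\<lambda>\<phi>. \<Sum>j\<in>{1..N}. E \<phi> s a j) has_derivative (\<lambda>h. \<Sum>j\<in>{1..N}. DE s a j h)) (at \<theta>)"
    by (intro has_derivative_sum hdE)
  ultimately have "(\<lambda>h. \<Sum>j\<in>{1..N}. DE s a j h) = (\<lambda>h. 0)"
    using has_derivative_const has_derivative_unique by metis
  then show ?thesis unfolding ms_def by (simp add: vec_eq_iff Gm_comp fun_eq_iff)
qed

lemma gg_ms: "ms (gg s) = 0"
proof -
  have "(\<lambda>\<phi>. \<Sum>a\<in>UNIV. \<pi> \<phi> s a) = (\<lambda>\<phi>. 1)" using pol by (auto simp: policy_def)
  moreover have "((\<lambda>\<phi>. \<Sum>a\<in>UNIV. \<pi> \<phi> s a) has_derivative (\<lambda>h. \<Sum>a\<in>UNIV. Dpi s a h)) (at \<theta>)"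
    by (intro has_derivative_sum hdpi)
  ultimately have z: "(\<lambda>h. \<Sum>a\<in>UNIV. Dpi s a h) = (\<lambda>h. 0)"
    using has_derivative_const has_derivative_unique by metis
  have "ms (gg s) = (\<Sum>a\<in>UNIV. (\<Sum>j\<in>{1..N}. E \<theta> s a j) *\<^sub>R grad (\<lambda>\<phi>. \<pi> \<phi> s a) \<theta>)"
    unfolding ms_def gg_def by (subst sum.swap) (simp add: scaleR_sum_left)
  also have "\<dots> = (\<Sum>a\<in>UNIV. grad (\<lambda>\<phi>. \<pi> \<phi> s a) \<theta>)"
    using E_dist by (simp add: dist_family_def)
  also have "\<dots> = 0" using z by (simp add: vec_eq_iff gradpi_comp fun_eq_iff)
  finally show ?thesis .
qed


lemma Gm_eq: "Gm s a j = pp (C s a) (\<lambda>k. \<Sum>s'\<in>UNIV. P s a s' *\<^sub>R (gg s' k + (\<Sum>a'\<in>UNIV. \<pi> \<theta> s' a' *\<^sub>R Gm s' a' k))) j"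
proof -
  define pd where "pd k = proj_dirac N zmin zmax (C s a + \<gamma> * z k) j" for k
  have fe: "(\<lambda>\<phi>. E \<phi> s a j) = (\<lambda>\<phi>. \<Sum>k\<in>{1..N}. pd k * (\<Sum>s'\<in>UNIV. P s a s' * (\<Sum>a'\<in>UNIV. \<pi> \<phi> s' a' * E \<phi> s' a' k)))"
    by (rule ext, subst E_fix) (simp add: Tv_def proj_push_def pd_def)
  have hd: "((\<lambda>\<phi>. \<Sum>k\<in>{1..N}. pd k * (\<Sum>s'\<in>UNIV. P s a s' * (\<Sum>a'\<in>UNIV. \<pi> \<phi> s' a' * E \<phi> s' a' k)))
     has_derivative (\<lambda>h. \<Sum>k\<in>{1..N}. pd k * (\<Sum>s'\<in>UNIV. P s a s' * (\<Sum>a'\<in>UNIV. \<pi> \<theta> s' a' * DE s' a' k h + Dpi s' a' h * E \<theta> s' a' k)))) (at \<theta>)"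
    by (auto intro!: has_derivative_sum has_derivative_mult_right has_derivative_mult hdE hdpi)
  have "Gm s a j = (\<chi> i. \<Sum>k\<in>{1..N}. pd k * (\<Sum>s'\<in>UNIV. P s a s' * (\<Sum>a'\<in>UNIV. \<pi> \<theta> s' a' * DE s' a' k (axis i 1) + Dpi s' a' (axis i 1) * E \<theta> s' a' k)))"
    unfolding Gm_def fe by (rule grad_eq[OF hd])
  also have "\<dots> = pp (C s a) (\<lambda>k. \<Sum>s'\<in>UNIV. P s a s' *\<^sub>R (gg s' k + (\<Sum>a'\<in>UNIV. \<pi> \<theta> s' a' *\<^sub>R Gm s' a' k))) j"
    by (simp add: vec_eq_iff proj_push_def pd_def gg_def Gm_comp gradpi_comp sum.distrib algebra_simps)
  finally show ?thesis .
qed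

lemma lhs_eq: "grad (\<lambda>\<phi>. \<Sum>a\<in>UNIV. \<pi> \<phi> s a * E \<phi> s a i) \<theta> = gg s i + (\<Sum>a\<in>UNIV. \<pi> \<theta> s a *\<^sub>R Gm s a i)"
  if i: "i \<in> {1..N}"
proof -
  have hd: "((\<lambda>\<phi>. \<Sum>a\<in>UNIV. \<pi> \<phi> s a * E \<phi> s a i) has_derivative
       (\<lambda>h. \<Sum>a\<in>UNIV. \<pi> \<theta> s a * DE s a i h + Dpi s a h * E \<theta> s a i)) (at \<theta>)"
    using i by (auto intro!: has_derivative_sum has_derivative_mult hdE hdpi)
  show ?thesis unfolding grad_eq[OF hd]
    by (simp add: vec_eq_iff gg_def Gm_comp gradpi_comp sum.distrib algebra_simps)
qed

end



definition LL :: "nat \<Rightarrow> ('s::finite \<times> 'a::finite) list set" where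
  "LL m = {xs. set xs \<subseteq> UNIV \<and> length xs = m}"

lemma LL_finite: "finite (LL m)"
  unfolding LL_def by (rule finite_lists_length_eq) simp

lemma sum_LL_Suc:
  fixes f :: "('s::finite \<times> 'a::finite) list \<Rightarrow> 'v::comm_monoid_add"
  shows "(\<Sum>xs\<in>LL (Suc m). f xs) = (\<Sum>xs\<in>LL m. \<Sum>x\<in>UNIV. f (x # xs))"
proof -
  have img: "LL (Suc m) = (\<lambda>(xs, x). x # xs) ` (LL m \<times> UNIV)"
    unfolding LL_def by (rule lists_length_Suc_eq)
  have inj: "inj_on (\<lambda>(xs, x). x # xs) (LL m \<times> (UNIV :: ('s \<times> 'a) set))"
    by (auto simp: inj_on_def)
  have "(\<Sum>xs\<in>LL (Suc m). f xs) = (\<Sum>p\<in>LL m \<times> UNIV. f ((\<lambda>(xs, x). x # xs) p))"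
    unfolding img by (simp only: sum.reindex[OF inj] o_def)
  also have "\<dots> = (\<Sum>xs\<in>LL m. \<Sum>x\<in>UNIV. f (x # xs))"
    by (simp add: sum.cartesian_product split_def)
  finally show ?thesis .
qed

lemma LL_Suc_ne: "xs \<in> LL (Suc n) \<Longrightarrow> xs \<noteq> []"
  by (auto simp: LL_def)

lemma LL_0: "LL 0 = {[]}" by (auto simp: LL_def)

lemma sum_pair:
  fixes f :: "'s::finite \<times> 'a::finite \<Rightarrow> 'v::comm_monoid_add"
  shows "(\<Sum>x\<in>UNIV. f x) = (\<Sum>s\<in>UNIV. \<Sum>a\<in>UNIV. f (s, a))"
  by (simp add: UNIV_Times_UNIV[symmetric] sum.cartesian_product del: UNIV_Times_UNIV)

lemma split_hd:
  fixes u :: "('s::finite \<times> 'a) list \<Rightarrow> 'v::real_vector"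
  assumes "finite A"
  shows "(\<Sum>xs\<in>A. h (fst (hd xs)) *\<^sub>R u xs) = (\<Sum>s'\<in>UNIV. h s' *\<^sub>R (\<Sum>xs\<in>A. if fst (hd xs) = s' then u xs else 0))"
proof -
  have "(\<Sum>s'\<in>UNIV. h s' *\<^sub>R (\<Sum>xs\<in>A. if fst (hd xs) = s' then u xs else 0))
      = (\<Sum>s'\<in>UNIV. \<Sum>xs\<in>A. if fst (hd xs) = s' then h s' *\<^sub>R u xs else 0)"
    by (simp add: scaleR_sum_right if_distrib[of "\<lambda>v. h _ *\<^sub>R v"] cong: if_cong)
  also have "\<dots> = (\<Sum>xs\<in>A. \<Sum>s'\<in>UNIV. if fst (hd xs) = s' then h s' *\<^sub>R u xs else 0)"
    by (rule sum.swap)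
  also have "\<dots> = (\<Sum>xs\<in>A. h (fst (hd xs)) *\<^sub>R u xs)"
    by simp
  finally show ?thesis by simp
qed

lemma if_scaleR0: "(if c then a else 0) *\<^sub>R (v::'v::real_vector) = (if c then a *\<^sub>R v else 0)"
  by simp

context gsetup begin

definition lw :: "('s \<times> 'a) list \<Rightarrow> real" where
  "lw xs = (\<Prod>t<length xs. \<pi> \<theta> (fst (xs!t)) (snd (xs!t)))
         * (\<Prod>t<length xs - 1. P (fst (xs!t)) (snd (xs!t)) (fst (xs!Suc t)))"

definition SF :: "('s \<times> 'a) list \<Rightarrow> nat \<Rightarrow> real^'d" where
  "SF xs j = gg (fst (xs!0)) j + (\<Sum>t<length xs - 1.
      comp_ops N zmin zmax \<gamma> (map (\<lambda>k. C (fst (xs!k)) (snd (xs!k))) [0..<Suc t]) (gg (fst (xs!Suc t))) j)"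

lemma lw_single: "lw [x] = \<pi> \<theta> (fst x) (snd x)"
  by (simp add: lw_def)

lemma lw_cons: "xs \<noteq> [] \<Longrightarrow> lw (x # xs) = \<pi> \<theta> (fst x) (snd x) * P (fst x) (snd x) (fst (hd xs)) * lw xs"
proof -
  assume ne: "xs \<noteq> []"
  then obtain m where m: "length xs = Suc m" by (cases xs) auto
  have "lw (x # xs) = (\<pi> \<theta> (fst x) (snd x) * (\<Prod>t<length xs. \<pi> \<theta> (fst (xs!t)) (snd (xs!t))))
        * (P (fst x) (snd x) (fst (xs!0)) * (\<Prod>t<m. P (fst (xs!t)) (snd (xs!t)) (fst (xs!Suc t))))"
    unfolding lw_def using m by (simp only: length_Cons prod.lessThan_Suc_shift diff_Suc_1 nth_Cons_0 nth_Cons_Suc)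
  also have "\<dots> = \<pi> \<theta> (fst x) (snd x) * P (fst x) (snd x) (fst (hd xs)) * lw xs"
    using m ne by (simp add: lw_def hd_conv_nth)
  finally show ?thesis .
qed

lemma SF_single: "SF [x] j = gg (fst x) j"
  by (simp add: SF_def)

lemma comp_ops_sum: "comp_ops N zmin zmax \<gamma> cs (\<lambda>j. \<Sum>x\<in>X. f x j) j' = (\<Sum>x\<in>X. comp_ops N zmin zmax \<gamma> cs (f x) j')"
proof (induction cs arbitrary: j')
  case Nil then show ?case by simp
next
  case (Cons c cs)
  have e: "comp_ops N zmin zmax \<gamma> cs (\<lambda>j. \<Sum>x\<in>X. f x j) = (\<lambda>j. \<Sum>x\<in>X. comp_ops N zmin zmax \<gamma> cs (f x) j)"
    by (rule ext) (rule Cons.IH)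
  have "comp_ops N zmin zmax \<gamma> (c # cs) (\<lambda>j. \<Sum>x\<in>X. f x j) j' = pp c (\<lambda>j. \<Sum>x\<in>X. comp_ops N zmin zmax \<gamma> cs (f x) j) j'"
    by (simp only: comp_ops.simps e)
  also have "\<dots> = (\<Sum>x\<in>X. comp_ops N zmin zmax \<gamma> (c # cs) (f x) j')"
    by (simp add: pp_sum)
  finally show ?case .
qed

lemma SF_cons: "xs \<noteq> [] \<Longrightarrow> SF (x # xs) j = gg (fst x) j + pp (C (fst x) (snd x)) (SF xs) j"
proof -
  assume ne: "xs \<noteq> []"
  then obtain m where m: "length xs = Suc m" by (cases xs) auto
  define c where "c = (\<lambda>k. C (fst ((x#xs)!k)) (snd ((x#xs)!k)))"
  define c' where "c' = (\<lambda>k. C (fst (xs!k)) (snd (xs!k)))"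
  have cc: "c (Suc k) = c' k" for k by (simp add: c_def c'_def)
  have mp: "map c [0..<Suc (Suc t)] = c 0 # map c' [0..<Suc t]" for t
    by (simp only: upt_conv_Cons[of 0 "Suc (Suc t)"] map_Suc_upt[symmetric] map_map cc o_def, simp add: cc[symmetric])
  have "SF (x # xs) j = gg (fst x) j + (\<Sum>t<Suc m. comp_ops N zmin zmax \<gamma> (map c [0..<Suc t]) (gg (fst ((x#xs)!Suc t))) j)"
    unfolding SF_def c_def using m by simp
  also have "(\<Sum>t<Suc m. comp_ops N zmin zmax \<gamma> (map c [0..<Suc t]) (gg (fst ((x#xs)!Suc t))) j)
     = pp (c 0) (gg (fst (xs!0))) j + (\<Sum>t<m. pp (c 0) (comp_ops N zmin zmax \<gamma> (map c' [0..<Suc t]) (gg (fst (xs!Suc t)))) j)"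
    by (simp only: sum.lessThan_Suc_shift mp) (simp add: c_def)
  also have "\<dots> = pp (c 0) (SF xs) j"
    unfolding SF_def m by (simp add: pp_add pp_sum c'_def)
  finally show ?thesis by (simp add: c_def)
qed


lemma mass0_aux: "(\<Sum>xs\<in>LL (Suc 0). if fst (hd xs) = s0 then lw xs else 0) = (\<Sum>s\<in>UNIV. \<Sum>a\<in>UNIV. if s = s0 then \<pi> \<theta> s a else 0)"
  apply (simp only: sum_LL_Suc sum_pair LL_0)
  apply (simp add: lw_single cong: if_cong)
  done
lemma Fp0_aux: "(\<Sum>xs\<in>LL (Suc 0). (if fst (hd xs) = s0 then lw xs else 0) *\<^sub>R SF xs j) = (\<Sum>s\<in>UNIV. \<Sum>a\<in>UNIV. if s = s0 then \<pi> \<theta> s a *\<^sub>R gg s j else 0)"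
  apply (simp only: sum_LL_Suc sum_pair LL_0)
  apply (simp add: lw_single SF_single if_scaleR0 cong: if_cong)
  done

lemma pi_sum1: "(\<Sum>a\<in>UNIV. \<pi> \<theta> s a) = 1" using pol[of \<theta>] by (simp add: policy_def)
lemma pi_nn: "0 \<le> \<pi> \<theta> s a" using pol[of \<theta>] by (simp add: policy_def)

lemma sum_LL_Suc_cons:
  fixes F :: "'s \<Rightarrow> 'a \<Rightarrow> ('s \<times> 'a) list \<Rightarrow> 'v::real_vector"
  shows "(\<Sum>xs\<in>LL (Suc (Suc n)). if fst (hd xs) = s0 then lw xs *\<^sub>R F (fst (hd xs)) (snd (hd xs)) (tl xs) else 0)
   = (\<Sum>a\<in>UNIV. \<pi> \<theta> s0 a *\<^sub>R (\<Sum>xs\<in>LL (Suc n). P s0 a (fst (hd xs)) *\<^sub>R (lw xs *\<^sub>R F s0 a xs)))"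
proof -
  have "(\<Sum>xs\<in>LL (Suc (Suc n)). if fst (hd xs) = s0 then lw xs *\<^sub>R F (fst (hd xs)) (snd (hd xs)) (tl xs) else 0)
     = (\<Sum>xs\<in>LL (Suc n). \<Sum>s\<in>UNIV. \<Sum>a\<in>UNIV. if s = s0 then lw ((s,a) # xs) *\<^sub>R F s a xs else 0)"
    by (subst sum_LL_Suc, subst sum_pair) (simp cong: if_cong)
  also have "\<dots> = (\<Sum>xs\<in>LL (Suc n). \<Sum>a\<in>UNIV. (\<pi> \<theta> s0 a * P s0 a (fst (hd xs)) * lw xs) *\<^sub>R F s0 a xs)"
    apply (intro sum.cong refl)
    apply (simp add: lw_cons LL_Suc_ne cong: if_cong)
    apply (subst sum.swap)
    apply (simp add: sum.delta)
    done
  also have "\<dots> = (\<Sum>a\<in>UNIV. \<pi> \<theta> s0 a *\<^sub>R (\<Sum>xs\<in>LL (Suc n). P s0 a (fst (hd xs)) *\<^sub>R (lw xs *\<^sub>R F s0 a xs)))"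
    by (subst sum.swap) (simp add: scaleR_sum_right mult.assoc)
  finally show ?thesis .
qed

lemma lw_mass: "(\<Sum>xs\<in>LL (Suc n). if fst (hd xs) = s0 then lw xs else 0) = 1"
proof (induction n arbitrary: s0)
  case 0
  have "(\<Sum>xs\<in>LL (Suc 0). if fst (hd xs) = s0 then lw xs else 0) = (\<Sum>s\<in>UNIV. \<Sum>a\<in>UNIV. if s = s0 then \<pi> \<theta> s a else 0)"
    by (rule mass0_aux)
  also have "\<dots> = 1" by (subst sum.swap) (simp add: sum.delta pi_sum1)
  finally show ?case .
next
  case (Suc n)
  have "(\<Sum>xs\<in>LL (Suc (Suc n)). if fst (hd xs) = s0 then lw xs else 0)
     = (\<Sum>xs\<in>LL (Suc (Suc n)). if fst (hd xs) = s0 then lw xs *\<^sub>R (\<lambda>s a xs. 1::real) (fst (hd xs)) (snd (hd xs)) (tl xs) else 0)"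
    by (simp cong: if_cong)
  also have "\<dots> = (\<Sum>a\<in>UNIV. \<pi> \<theta> s0 a *\<^sub>R (\<Sum>xs\<in>LL (Suc n). P s0 a (fst (hd xs)) *\<^sub>R lw xs))"
    by (subst sum_LL_Suc_cons) simp
  also have "\<dots> = (\<Sum>a\<in>UNIV. \<pi> \<theta> s0 a *\<^sub>R (\<Sum>s'\<in>UNIV. P s0 a s' *\<^sub>R 1))"
    by (simp only: split_hd[OF LL_finite] Suc)
  also have "\<dots> = 1" by (simp add: P_sum pi_sum1)
  finally show ?case .
qed

definition Fp :: "nat \<Rightarrow> 's \<Rightarrow> nat \<Rightarrow> real^'d" where
  "Fp n s0 j = (\<Sum>xs\<in>LL (Suc n). (if fst (hd xs) = s0 then lw xs else 0) *\<^sub>R SF xs j)"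

lemma Fp_0: "Fp 0 s0 j = gg s0 j"
proof -
  have "Fp 0 s0 j = (\<Sum>s\<in>UNIV. \<Sum>a\<in>UNIV. if s = s0 then \<pi> \<theta> s a *\<^sub>R gg s j else 0)"
    unfolding Fp_def by (rule Fp0_aux)
  also have "\<dots> = gg s0 j" by (subst sum.swap) (simp add: sum.delta scaleR_sum_left[symmetric] pi_sum1)
  finally show ?thesis .
qed

lemma Fp_Suc: "Fp (Suc n) s0 j = gg s0 j + (\<Sum>a\<in>UNIV. \<pi> \<theta> s0 a *\<^sub>R pp (C s0 a) (\<lambda>k. \<Sum>s'\<in>UNIV. P s0 a s' *\<^sub>R Fp n s' k) j)"
proof -
  have "Fp (Suc n) s0 j = (\<Sum>xs\<in>LL (Suc (Suc n)). if fst (hd xs) = s0 then lw xs *\<^sub>R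
       (\<lambda>s a xs. gg s j + pp (C s a) (SF xs) j) (fst (hd xs)) (snd (hd xs)) (tl xs) else 0)"
    unfolding Fp_def
  proof (intro sum.cong refl)
    fix xs :: "('s \<times> 'a) list" assume xs: "xs \<in> LL (Suc (Suc n))"
    then have len: "length xs = Suc (Suc n)" by (simp add: LL_def)
    then obtain x ys where xs': "xs = x # ys" "length ys = Suc n" by (auto simp: length_Suc_conv)
    then have "ys \<noteq> []" by auto
    show "(if fst (hd xs) = s0 then lw xs else 0) *\<^sub>R SF xs j = (if fst (hd xs) = s0 then lw xs *\<^sub>R
       (\<lambda>s a xs. gg s j + pp (C s a) (SF xs) j) (fst (hd xs)) (snd (hd xs)) (tl xs) else 0)"
      using xs' \<open>ys \<noteq> []\<close> by (simp add: SF_cons)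
  qed
  also have "\<dots> = (\<Sum>a\<in>UNIV. \<pi> \<theta> s0 a *\<^sub>R (\<Sum>xs\<in>LL (Suc n). P s0 a (fst (hd xs)) *\<^sub>R (lw xs *\<^sub>R (gg s0 j + pp (C s0 a) (SF xs) j))))"
    by (rule sum_LL_Suc_cons)
  also have "\<dots> = (\<Sum>a\<in>UNIV. \<pi> \<theta> s0 a *\<^sub>R (gg s0 j + pp (C s0 a) (\<lambda>k. \<Sum>s'\<in>UNIV. P s0 a s' *\<^sub>R Fp n s' k) j))"
  proof (intro sum.cong refl arg_cong2[where f=scaleR])
    fix a
    have m1: "(\<Sum>xs\<in>LL (Suc n). P s0 a (fst (hd xs)) *\<^sub>R lw xs) = 1"
      by (simp only: split_hd[OF LL_finite] lw_mass) (simp add: P_sum)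
    have m2': "(\<Sum>xs\<in>LL (Suc n). P s0 a (fst (hd xs)) *\<^sub>R (lw xs *\<^sub>R SF xs k)) = (\<Sum>s'\<in>UNIV. P s0 a s' *\<^sub>R Fp n s' k)" for k
      by (subst split_hd[where h="P s0 a" and u="\<lambda>xs. lw xs *\<^sub>R SF xs k", OF LL_finite]) (simp add: Fp_def if_scaleR0 cong: if_cong)
    have m2: "(\<lambda>k. \<Sum>xs\<in>LL (Suc n). P s0 a (fst (hd xs)) *\<^sub>R (lw xs *\<^sub>R SF xs k)) = (\<lambda>k. \<Sum>s'\<in>UNIV. P s0 a s' *\<^sub>R Fp n s' k)"
      using m2' by (rule ext)
    have "(\<Sum>xs\<in>LL (Suc n). P s0 a (fst (hd xs)) *\<^sub>R (lw xs *\<^sub>R (gg s0 j + pp (C s0 a) (SF xs) j)))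
       = (\<Sum>xs\<in>LL (Suc n). P s0 a (fst (hd xs)) *\<^sub>R lw xs) *\<^sub>R gg s0 j
         + pp (C s0 a) (\<lambda>k. \<Sum>xs\<in>LL (Suc n). P s0 a (fst (hd xs)) *\<^sub>R (lw xs *\<^sub>R SF xs k)) j"
      by (simp add: pp_sum pp_scale scaleR_add_right sum.distrib scaleR_sum_left)
    also have "\<dots> = gg s0 j + pp (C s0 a) (\<lambda>k. \<Sum>s'\<in>UNIV. P s0 a s' *\<^sub>R Fp n s' k) j"
      by (simp only: m1 m2 scaleR_one)
    finally show "(\<Sum>xs\<in>LL (Suc n). P s0 a (fst (hd xs)) *\<^sub>R (lw xs *\<^sub>R (gg s0 j + pp (C s0 a) (SF xs) j)))
       = gg s0 j + pp (C s0 a) (\<lambda>k. \<Sum>s'\<in>UNIV. P s0 a s' *\<^sub>R Fp n s' k) j" .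
  qed
  also have "\<dots> = gg s0 j + (\<Sum>a\<in>UNIV. \<pi> \<theta> s0 a *\<^sub>R pp (C s0 a) (\<lambda>k. \<Sum>s'\<in>UNIV. P s0 a s' *\<^sub>R Fp n s' k) j)"
    by (simp add: scaleR_add_right sum.distrib scaleR_sum_left[symmetric] pi_sum1)
  finally show ?thesis .
qed

end



context gsetup begin

definition VV where "VV s j = (\<Sum>a\<in>UNIV. \<pi> \<theta> s a *\<^sub>R Gm s a j)"
definition WW where "WW s j = gg s j + VV s j"

lemma W_rec: "WW s0 j = gg s0 j + (\<Sum>a\<in>UNIV. \<pi> \<theta> s0 a *\<^sub>R pp (C s0 a) (\<lambda>k. \<Sum>s'\<in>UNIV. P s0 a s' *\<^sub>R WW s' k) j)"
  unfolding WW_def VV_def by (subst Gm_eq) simp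

lemma VV_ms: "ms (VV s) = 0"
  unfolding VV_def by (simp add: ms_sum ms_scale Gm_ms)

definition Dn where "Dn n s j = Fp n s j - WW s j"

lemma Dn_Suc: "Dn (Suc n) s0 j = (\<Sum>a\<in>UNIV. \<pi> \<theta> s0 a *\<^sub>R pp (C s0 a) (\<lambda>k. \<Sum>s'\<in>UNIV. P s0 a s' *\<^sub>R Dn n s' k) j)"
proof -
  have e: "(\<lambda>k. \<Sum>s'\<in>UNIV. P s0 a s' *\<^sub>R Dn n s' k) = (\<lambda>k. (\<Sum>s'\<in>UNIV. P s0 a s' *\<^sub>R Fp n s' k) - (\<Sum>s'\<in>UNIV. P s0 a s' *\<^sub>R WW s' k))" for a
    by (simp add: Dn_def scaleR_diff_right sum_subtractf)
  show ?thesis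
    unfolding e pp_diff Dn_def by (subst Fp_Suc, subst W_rec) (simp add: pp_diff scaleR_diff_right sum_subtractf)
qed

lemma Dn_bound: "ms (Dn n s) = 0 \<and> cn (Dn n s) \<le> \<gamma> ^ n * (\<Sum>s'\<in>UNIV. cn (Dn 0 s'))"
proof (induction n arbitrary: s)
  case 0
  have "ms (Dn 0 s) = 0"
  proof -
    have "Dn 0 s = (\<lambda>j. - VV s j)" by (simp add: Dn_def fun_eq_iff Fp_0 WW_def)
    then show ?thesis using VV_ms[of s] unfolding ms_def by (simp add: sum_negf)
  qed
  moreover have "cn (Dn 0 s) \<le> (\<Sum>s'\<in>UNIV. cn (Dn 0 s'))"
    by (rule member_le_sum) (auto simp: cn_nonneg)
  ultimately show ?case by simp
next
  case (Suc n)
  define B where "B = \<gamma> ^ n * (\<Sum>s'\<in>UNIV. cn (Dn 0 s'))"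
  have inner: "cn (pp (C s a) (\<lambda>k. \<Sum>s'\<in>UNIV. P s a s' *\<^sub>R Dn n s' k)) \<le> \<gamma> * B"
     "ms (pp (C s a) (\<lambda>k. \<Sum>s'\<in>UNIV. P s a s' *\<^sub>R Dn n s' k)) = 0" for a
    using Suc.IH unfolding B_def by (auto intro!: mixpp P_nonneg P_sum)
  have e: "Dn (Suc n) s = (\<lambda>j. \<Sum>a\<in>UNIV. \<pi> \<theta> s a *\<^sub>R pp (C s a) (\<lambda>k. \<Sum>s'\<in>UNIV. P s a s' *\<^sub>R Dn n s' k) j)"
    by (rule ext) (rule Dn_Suc)
  have "cn (Dn (Suc n) s) \<le> \<gamma> * B" "ms (Dn (Suc n) s) = 0"
    unfolding e using inner by (auto intro!: mixcn pi_nn pi_sum1)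
  then show ?case by (simp add: B_def mult.assoc)
qed

lemma Fp_lim: "i \<in> {1..N} \<Longrightarrow> (\<lambda>n. Fp n s i) \<longlonglongrightarrow> WW s i"
proof -
  assume i: "i \<in> {1..N}"
  define B where "B = (\<Sum>s'\<in>UNIV. cn (Dn 0 s'))"
  have b: "norm (Fp n s i - WW s i) \<le> 2 * B * \<gamma> ^ n" for n
  proof -
    have d: "ms (Dn n s) = 0" "cn (Dn n s) \<le> \<gamma> ^ n * B" using Dn_bound[of n s] unfolding B_def by auto
    have "norm (Dn n s i) \<le> 2 * cn (Dn n s)" by (rule cn_comp[OF d(1) i])
    also have "\<dots> \<le> 2 * (\<gamma> ^ n * B)" using d(2) by simp
    finally show ?thesis by (simp add: Dn_def mult.commute mult.left_commute)
  qed
  have "(\<lambda>n. 2 * B * \<gamma> ^ n) \<longlonglongrightarrow> 2 * B * 0"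
    using g0 g1 by (intro tendsto_mult tendsto_const LIMSEQ_power_zero) auto
  hence g0': "(\<lambda>n. 2 * B * \<gamma> ^ n) \<longlonglongrightarrow> 0" by simp
  have "(\<lambda>n. Fp n s i - WW s i) \<longlonglongrightarrow> 0"
    by (rule Lim_null_comparison[OF _ g0']) (intro always_eventually allI b)
  thus ?thesis by (rule LIM_zero_cancel)
qed

lemma comp_bound:
  fixes w :: "nat \<Rightarrow> 'v::real_normed_vector"
  assumes "ms w = 0"
  shows "ms (comp_ops N zmin zmax \<gamma> cs w) = 0 \<and> cn (comp_ops N zmin zmax \<gamma> cs w) \<le> \<gamma> ^ length cs * cn w"
proof (induction cs)
  case Nil then show ?case using assms by simp
next
  case (Cons c cs)
  have "cn (pp c (comp_ops N zmin zmax \<gamma> cs w)) \<le> \<gamma> * cn (comp_ops N zmin zmax \<gamma> cs w)"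
    using Cons by (intro contraction) auto
  also have "\<dots> \<le> \<gamma> * (\<gamma> ^ length cs * cn w)" using Cons g0 by (intro mult_left_mono) auto
  finally show ?case using Cons by (simp add: pp_ms mult.assoc)
qed

end



context gsetup begin

lemma main:
  fixes M :: "'w measure" and S :: "nat \<Rightarrow> 'w \<Rightarrow> 's" and A :: "nat \<Rightarrow> 'w \<Rightarrow> 'a" and s :: 's
  assumes M: "prob_space M"
    and S_meas: "\<And>t. S t \<in> measurable M (count_space UNIV)"
    and A_meas: "\<And>t. A t \<in> measurable M (count_space UNIV)"
    and traj_law: "\<And>n (ss :: nat \<Rightarrow> 's) (as :: nat \<Rightarrow> 'a).
        measure M {\<omega> \<in> space M. \<forall>t\<le>n. S t \<omega> = ss t \<and> A t \<omega> = as t}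
          = (if ss 0 = s then 1 else 0) * (\<Prod>t\<in>{..n}. \<pi> \<theta> (ss t) (as t))
            * (\<Prod>t\<in>{..<n}. P (ss t) (as t) (ss (Suc t)))"
    and i: "i \<in> {1..N}"
  shows "integral\<^sup>L M (\<lambda>\<omega>. gg (S 0 \<omega>) i + (\<Sum>t. comp_ops N zmin zmax \<gamma> (map (\<lambda>k. C (S k \<omega>) (A k \<omega>)) [0..<Suc t])
                       (gg (S (Suc t) \<omega>)) i)) = WW s i"
proof -
  interpret prob_space M by (rule M)
  define tm where "tm t \<omega> = comp_ops N zmin zmax \<gamma> (map (\<lambda>k. C (S k \<omega>) (A k \<omega>)) [0..<Suc t]) (gg (S (Suc t) \<omega>)) i" for t \<omega>
  define X where "X n \<omega> = gg (S 0 \<omega>) i + (\<Sum>t<n. tm t \<omega>)" for n \<omega>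
  define Xi where "Xi \<omega> = gg (S 0 \<omega>) i + (\<Sum>t. tm t \<omega>)" for \<omega>
  define cyl where "cyl n xs = {\<omega> \<in> space M. \<forall>t\<le>n. S t \<omega> = fst (xs!t) \<and> A t \<omega> = snd (xs!t)}" for n and xs :: "('s \<times> 'a) list"
  define rho where "rho n \<omega> = map (\<lambda>t. (S t \<omega>, A t \<omega>)) [0..<Suc n]" for n \<omega>
  define Gs where "Gs = (\<Sum>s'\<in>UNIV. cn (gg s'))"
  have Gs0: "0 \<le> Gs" unfolding Gs_def by (intro sum_nonneg cn_nonneg)
  have Gsle: "cn (gg s') \<le> Gs" for s'
    unfolding Gs_def by (rule member_le_sum) (auto simp: cn_nonneg)
  have tm_bound: "norm (tm t \<omega>) \<le> 2 * Gs * \<gamma> * \<gamma> ^ t" for t \<omega>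
  proof -
    let ?cs = "map (\<lambda>k. C (S k \<omega>) (A k \<omega>)) [0..<Suc t]"
    have cb: "ms (comp_ops N zmin zmax \<gamma> ?cs (gg (S (Suc t) \<omega>))) = 0"
      "cn (comp_ops N zmin zmax \<gamma> ?cs (gg (S (Suc t) \<omega>))) \<le> \<gamma> ^ Suc t * cn (gg (S (Suc t) \<omega>))"
      using comp_bound[OF gg_ms[of "S (Suc t) \<omega>"], of ?cs] by auto
    have "norm (tm t \<omega>) \<le> 2 * cn (comp_ops N zmin zmax \<gamma> ?cs (gg (S (Suc t) \<omega>)))"
      unfolding tm_def by (rule cn_comp[OF cb(1) i])
    also have "\<dots> \<le> 2 * (\<gamma> ^ Suc t * Gs)"
      using cb(2) mult_left_mono[OF Gsle[of "S (Suc t) \<omega>"], of "\<gamma> ^ Suc t"] g0 by simp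
    finally show ?thesis by (simp add: algebra_simps)
  qed
  have sg: "summable (\<lambda>t. 2 * Gs * \<gamma> * \<gamma> ^ t)"
    using g0 g1 by (intro summable_mult summable_geometric) auto
  have summ: "summable (\<lambda>t. tm t \<omega>)" for \<omega>
    by (rule summable_comparison_test[OF _ sg]) (use tm_bound in blast)
  have lim: "(\<lambda>n. X n \<omega>) \<longlonglongrightarrow> Xi \<omega>" for \<omega>
    unfolding X_def Xi_def by (intro tendsto_add tendsto_const summable_LIMSEQ summ)
  define K where "K = (\<Sum>s'\<in>UNIV. norm (gg s' i)) + (\<Sum>t. 2 * Gs * \<gamma> * \<gamma> ^ t)"
  have Xbound: "norm (X n \<omega>) \<le> K" for n \<omega>
  proof -
    have "norm (X n \<omega>) \<le> norm (gg (S 0 \<omega>) i) + norm (\<Sum>t<n. tm t \<omega>)"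
      unfolding X_def by (rule norm_triangle_ineq)
    also have "norm (\<Sum>t<n. tm t \<omega>) \<le> (\<Sum>t<n. 2 * Gs * \<gamma> * \<gamma> ^ t)"
      by (rule order_trans[OF norm_sum sum_mono]) (rule tm_bound)
    also have "(\<Sum>t<n. 2 * Gs * \<gamma> * \<gamma> ^ t) \<le> (\<Sum>t. 2 * Gs * \<gamma> * \<gamma> ^ t)"
      using Gs0 g0 by (intro sum_le_suminf sg) auto
    also have "norm (gg (S 0 \<omega>) i) \<le> (\<Sum>s'\<in>UNIV. norm (gg s' i))"
      by (rule member_le_sum) auto
    finally show ?thesis unfolding K_def by simp
  qed
  have rhoLL: "rho n \<omega> \<in> LL (Suc n)" for n \<omega> by (simp add: rho_def LL_def)
  have cyl_iff: "\<omega> \<in> cyl n xs \<longleftrightarrow> xs = rho n \<omega>" if "\<omega> \<in> space M" "xs \<in> LL (Suc n)" for \<omega> n xs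
  proof -
    have len: "length xs = Suc n" using that by (simp add: LL_def)
    show ?thesis
    proof
      assume "\<omega> \<in> cyl n xs"
      then have "\<forall>t\<le>n. S t \<omega> = fst (xs!t) \<and> A t \<omega> = snd (xs!t)" by (simp add: cyl_def)
      then show "xs = rho n \<omega>" using len
        by (intro nth_equalityI) (auto simp: rho_def nth_map_upt less_Suc_eq_le prod_eq_iff simp del: upt_Suc)
    next
      assume "xs = rho n \<omega>"
      then show "\<omega> \<in> cyl n xs" using that(1)
        by (auto simp: cyl_def rho_def nth_map_upt less_Suc_eq_le simp del: upt_Suc)
    qed
  qed
  have X_SF: "X n \<omega> = SF (rho n \<omega>) i" for n \<omega>
  proof -
    have "SF (rho n \<omega>) i = gg (S 0 \<omega>) i + (\<Sum>t<n. tm t \<omega>)"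
      unfolding SF_def
    proof (intro arg_cong2[where f="(+)"] sum.cong)
      show "gg (fst (rho n \<omega> ! 0)) i = gg (S 0 \<omega>) i" by (simp add: rho_def nth_map_upt del: upt_Suc)
      show "{..<length (rho n \<omega>) - 1} = {..<n}" by (simp add: rho_def)
    next
      fix t assume "t \<in> {..<n}"
      then have t: "t < n" by simp
      have m: "map (\<lambda>k. C (fst (rho n \<omega> ! k)) (snd (rho n \<omega> ! k))) [0..<Suc t] = map (\<lambda>k. C (S k \<omega>) (A k \<omega>)) [0..<Suc t]"
        using t by (intro map_cong refl) (auto simp: rho_def nth_map_upt simp del: upt_Suc)
      have f: "fst (rho n \<omega> ! Suc t) = S (Suc t) \<omega>" using t by (simp add: rho_def nth_map_upt del: upt_Suc)
      show "comp_ops N zmin zmax \<gamma> (map (\<lambda>k. C (fst (rho n \<omega> ! k)) (snd (rho n \<omega> ! k))) [0..<Suc t]) (gg (fst (rho n \<omega> ! Suc t))) i = tm t \<omega>"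
        unfolding m f tm_def by (rule refl)
    qed
    then show ?thesis by (simp add: X_def)
  qed
  have X_rep: "X n \<omega> = (\<Sum>xs\<in>LL (Suc n). indicator (cyl n xs) \<omega> *\<^sub>R SF xs i)" if "\<omega> \<in> space M" for n \<omega>
  proof -
    have "(\<Sum>xs\<in>LL (Suc n). indicator (cyl n xs) \<omega> *\<^sub>R SF xs i) = (\<Sum>xs\<in>LL (Suc n). if xs = rho n \<omega> then SF xs i else 0)"
      by (intro sum.cong refl) (simp add: indicator_def cyl_iff[OF that])
    also have "\<dots> = SF (rho n \<omega>) i" using rhoLL[of n \<omega>] by (simp add: sum.delta' LL_finite)
    finally show ?thesis by (simp add: X_SF)
  qed
  note [measurable] = S_meas A_meas
  have cyl_sets: "cyl n xs \<in> sets M" for n xs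
    unfolding cyl_def by measurable
  have cyl_meas: "measure M (cyl n xs) = (if fst (hd xs) = s then lw xs else 0)" if "xs \<in> LL (Suc n)" for n xs
  proof -
    have len: "length xs = Suc n" using that by (simp add: LL_def)
    have "measure M (cyl n xs) = (if fst (xs!0) = s then 1 else 0) * (\<Prod>t\<in>{..n}. \<pi> \<theta> (fst (xs!t)) (snd (xs!t)))
            * (\<Prod>t\<in>{..<n}. P (fst (xs!t)) (snd (xs!t)) (fst (xs!Suc t)))"
      unfolding cyl_def by (rule traj_law)
    also have "\<dots> = (if fst (hd xs) = s then lw xs else 0)"
    proof -
      have h: "hd xs = xs ! 0" using len by (intro hd_conv_nth) auto
      show ?thesis unfolding h lw_def len using lessThan_Suc_atMost[of n] by simp
    qed
    finally show ?thesis .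
  qed
  have Xmeas: "X n \<in> borel_measurable M" for n
  proof -
    have "(\<lambda>\<omega>. \<Sum>xs\<in>LL (Suc n). indicator (cyl n xs) \<omega> *\<^sub>R SF xs i) \<in> borel_measurable M"
      using cyl_sets by measurable
    then show ?thesis by (subst measurable_cong[OF X_rep]) auto
  qed
  have intX: "integral\<^sup>L M (X n) = Fp n s i" for n
  proof -
    have "integral\<^sup>L M (X n) = integral\<^sup>L M (\<lambda>\<omega>. \<Sum>xs\<in>LL (Suc n). indicator (cyl n xs) \<omega> *\<^sub>R SF xs i)"
      by (rule Bochner_Integration.integral_cong[OF refl]) (rule X_rep)
    also have "\<dots> = (\<Sum>xs\<in>LL (Suc n). integral\<^sup>L M (\<lambda>\<omega>. indicator (cyl n xs) \<omega> *\<^sub>R SF xs i))"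
      by (rule Bochner_Integration.integral_sum) (auto intro!: integrable_scaleR_left integrable_real_indicator cyl_sets simp: less_top[symmetric])
    also have "\<dots> = (\<Sum>xs\<in>LL (Suc n). measure M (cyl n xs) *\<^sub>R SF xs i)"
    proof (intro sum.cong refl)
      fix xs
      have "integral\<^sup>L M (\<lambda>\<omega>. indicator (cyl n xs) \<omega> *\<^sub>R SF xs i) = integral\<^sup>L M (indicator (cyl n xs)) *\<^sub>R SF xs i"
        by (rule Bochner_Integration.integral_scaleR_left) (auto intro!: integrable_real_indicator cyl_sets simp: less_top[symmetric])
      also have "\<dots> = measure M (cyl n xs) *\<^sub>R SF xs i"
        using sets.sets_into_space[OF cyl_sets[of n xs]] by (simp add: Int_absorb2)
      finally show "integral\<^sup>L M (\<lambda>\<omega>. indicator (cyl n xs) \<omega> *\<^sub>R SF xs i) = measure M (cyl n xs) *\<^sub>R SF xs i" .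
    qed
    also have "\<dots> = Fp n s i"
      unfolding Fp_def by (intro sum.cong refl) (simp add: cyl_meas)
    finally show ?thesis .
  qed
  have Xi_meas: "Xi \<in> borel_measurable M"
    by (rule borel_measurable_LIMSEQ_metric[OF Xmeas lim])
  have "(\<lambda>n. integral\<^sup>L M (X n)) \<longlonglongrightarrow> integral\<^sup>L M Xi"
    by (rule integral_dominated_convergence[where w="\<lambda>_. K"]) (auto intro: Xi_meas Xmeas lim Xbound)
  hence "(\<lambda>n. Fp n s i) \<longlonglongrightarrow> integral\<^sup>L M Xi" by (simp add: intX)
  hence "integral\<^sup>L M Xi = WW s i" using Fp_lim[OF i] LIMSEQ_unique by blast
  moreover have "(\<lambda>\<omega>. gg (S 0 \<omega>) i + (\<Sum>t. comp_ops N zmin zmax \<gamma> (map (\<lambda>k. C (S k \<omega>) (A k \<omega>)) [0..<Suc t])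
                       (gg (S (Suc t) \<omega>)) i)) = Xi"
    by (rule ext) (simp only: Xi_def tm_def)
  ultimately show ?thesis by simp
qed

end

theorem theorem4:
  fixes N :: nat and zmin zmax \<gamma> :: real
    and C :: "'s::finite \<Rightarrow> 'a::finite \<Rightarrow> real"
    and P :: "'s \<Rightarrow> 'a \<Rightarrow> 's \<Rightarrow> real"
    and \<pi> :: "real^'d \<Rightarrow> 's \<Rightarrow> 'a \<Rightarrow> real"
    and \<theta> :: "real^'d" and s :: 's
    and M :: "'w measure" and S :: "nat \<Rightarrow> 'w \<Rightarrow> 's" and A :: "nat \<Rightarrow> 'w \<Rightarrow> 'a"
  assumes N: "N \<ge> 2" and z: "zmin < zmax"
    and \<gamma>: "0 \<le> \<gamma>" "\<gamma> < 1"
    and P_nonneg: "\<And>s a s'. 0 \<le> P s a s'" and P_sum: "\<And>s a. (\<Sum>s'\<in>UNIV. P s a s') = 1"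
    and pi_nonneg: "\<And>\<phi> s a. 0 \<le> \<pi> \<phi> s a" and pi_sum: "\<And>\<phi> s. (\<Sum>a\<in>UNIV. \<pi> \<phi> s a) = 1"
    and pi_diff: "\<And>s a \<phi>. (\<lambda>\<phi>'. \<pi> \<phi>' s a) differentiable (at \<phi>)"
    and eta_diff: "\<And>s a i \<phi>. i \<in> {1..N} \<Longrightarrow>
        (\<lambda>\<phi>'. eta_fix N zmin zmax \<gamma> C P (\<pi> \<phi>') s a i) differentiable (at \<phi>)"
    and M: "prob_space M"
    and S_meas: "\<And>t. S t \<in> measurable M (count_space UNIV)"
    and A_meas: "\<And>t. A t \<in> measurable M (count_space UNIV)"
    and traj_law: "\<And>n (ss :: nat \<Rightarrow> 's) (as :: nat \<Rightarrow> 'a).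
        measure M {\<omega> \<in> space M. \<forall>t\<le>n. S t \<omega> = ss t \<and> A t \<omega> = as t}
          = (if ss 0 = s then 1 else 0) * (\<Prod>t\<in>{..n}. \<pi> \<theta> (ss t) (as t))
            * (\<Prod>t\<in>{..<n}. P (ss t) (as t) (ss (Suc t)))"
  shows "\<forall>i\<in>{1..N}.
    grad (\<lambda>\<phi>. \<Sum>a\<in>UNIV. \<pi> \<phi> s a * eta_fix N zmin zmax \<gamma> C P (\<pi> \<phi>) s a i) \<theta>
    = (let g = (\<lambda>s' j. \<Sum>a\<in>UNIV. eta_fix N zmin zmax \<gamma> C P (\<pi> \<theta>) s' a j *\<^sub>R grad (\<lambda>\<phi>. \<pi> \<phi> s' a) \<theta>)
       in integral\<^sup>L M (\<lambda>\<omega>. g (S 0 \<omega>) i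
            + (\<Sum>t. comp_ops N zmin zmax \<gamma> (map (\<lambda>k. C (S k \<omega>) (A k \<omega>)) [0..<Suc t])
                       (g (S (Suc t) \<omega>)) i)))"
  proof -
  interpret gsetup N zmin zmax \<gamma> C P \<pi> \<theta>
  proof (unfold_locales)
    show "\<And>\<phi>. policy (\<pi> \<phi>)" using pi_nonneg pi_sum by (simp add: policy_def)
  qed (use N z \<gamma> P_nonneg P_sum pi_diff eta_diff in auto)
  show ?thesis
  proof
    fix i assume i: "i \<in> {1..N}"
    have g: "(\<lambda>s' j. \<Sum>a\<in>UNIV. eta_fix N zmin zmax \<gamma> C P (\<pi> \<theta>) s' a j *\<^sub>R grad (\<lambda>\<phi>. \<pi> \<phi> s' a) \<theta>) = gg"
      by (simp add: fun_eq_iff gg_def E_def)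
    have lhs: "grad (\<lambda>\<phi>. \<Sum>a\<in>UNIV. \<pi> \<phi> s a * eta_fix N zmin zmax \<gamma> C P (\<pi> \<phi>) s a i) \<theta> = WW s i"
      using lhs_eq[OF i, of s] by (simp add: E_def WW_def VV_def)
    show "grad (\<lambda>\<phi>. \<Sum>a\<in>UNIV. \<pi> \<phi> s a * eta_fix N zmin zmax \<gamma> C P (\<pi> \<phi>) s a i) \<theta>
    = (let g = (\<lambda>s' j. \<Sum>a\<in>UNIV. eta_fix N zmin zmax \<gamma> C P (\<pi> \<theta>) s' a j *\<^sub>R grad (\<lambda>\<phi>. \<pi> \<phi> s' a) \<theta>)
       in integral\<^sup>L M (\<lambda>\<omega>. g (S 0 \<omega>) i
            + (\<Sum>t. comp_ops N zmin zmax \<gamma> (map (\<lambda>k. C (S k \<omega>) (A k \<omega>)) [0..<Suc t])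
                       (g (S (Suc t) \<omega>)) i)))"
      unfolding Let_def g lhs using main[OF M S_meas A_meas traj_law i] by simp
  qed
qed

end
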